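(* Let $G\subset SO(3)$ be either the tetrahedral group $\mathbb{T}$ or the octahedral group $\mathbb{O}$ (in the coordinates fixed in the context), and let $R_{ij},R_{ji},R_i,R_j\in SO(3)$ satisfy the set equality $$\{R_{ij}^T g R_{ji} : g\in G\}=\{R_i^T g R_j : g\in G\}.$$ Then there exist $h_{ij},h_{ji}\in N_{SO(3)}(G)$ such that $R_{ij}=h_{ij}R_i$ and $R_{ji}=h_{ji}R_j$.
   Context: In the fixed coordinate system, $\mathbb{O}$ is the group of all $3\times 3$ signed permutation matrices (matrices with exactly one nonzero entry in each row and column, that entry being $\pm1$) having determinant $1$; it has 24 elements. $\mathbb{T}\subset\mathbb{O}$ is the 12-element subgroup consisting of the matrices $DP$ where $P$ is the permutation matrix of an even permutation of $\{1,2,3\}$ (identity or a 3-cycle) and $D$ is a diagonal matrix with diagonal entries $\pm1$ and $\det D=1$. For a subgroup $\tilde G$ of a group $\tilde H$, the normalizer is $N_{\tilde H}(\tilde G)=\{\tilde h\in\tilde H:\tilde h^T\tilde G\tilde h=\tilde G\}$ (for rotations, $\tilde h^T=\tilde h^{-1}$). *)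

theory Defs
  imports "HOL-Analysis.Analysis" "HOL-Combinatorics.Permutations"
begin

type_synonym mat3 = "real^3^3"

definition SO3 :: "mat3 set" where
  "SO3 = {Q. rotation_matrix Q}"

definition signed_perm_matrix :: "mat3 \<Rightarrow> bool" where
  "signed_perm_matrix A \<longleftrightarrow>
     (\<forall>i. \<exists>!j. A $ i $ j \<noteq> 0) \<and> (\<forall>j. \<exists>!i. A $ i $ j \<noteq> 0) \<and>
     (\<forall>i j. A $ i $ j \<in> {-1, 0, 1})"

definition octahedral_group :: "mat3 set" where
  "octahedral_group = {A. signed_perm_matrix A \<and> det A = 1}"

definition perm_matrix :: "(3 \<Rightarrow> 3) \<Rightarrow> mat3" where
  "perm_matrix p = (\<chi> i j. if i = p j then 1 else 0)"

definition diag_matrix :: "(3 \<Rightarrow> real) \<Rightarrow> mat3" where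
  "diag_matrix d = (\<chi> i j. if i = j then d i else 0)"

definition tetrahedral_group :: "mat3 set" where
  "tetrahedral_group = {diag_matrix d ** perm_matrix p | d p.
      (\<forall>i. d i \<in> {-1, 1}) \<and> det (diag_matrix d) = 1 \<and> p permutes UNIV \<and> evenperm p}"

definition normalizer :: "mat3 set \<Rightarrow> mat3 set \<Rightarrow> mat3 set" where
  "normalizer H G = {h \<in> H. (\<lambda>g. transpose h ** g ** h) ` G = G}"

end

theory Submission
  imports Defs
begin


lemma dp_entry: "(diag_matrix d ** perm_matrix p) $ i $ j = (if i = p j then d i else 0)"
proof -
  have "(\<lambda>k. (if i = k then d i else 0) * (if k = p j then 1 else 0)) =
        (\<lambda>k. if k = p j then (if i = p j then d i else 0) else (0::real))"
    by auto
  note eq = this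
  show ?thesis
    unfolding matrix_matrix_mult_def diag_matrix_def perm_matrix_def vec_lambda_beta eq
    by simp
qed

lemma mm_entry: "(A ** B) $ i $ j = (\<Sum>k\<in>UNIV. A $ i $ k * B $ k $ j)"
  by (simp add: matrix_matrix_mult_def)

lemma dp_eqI:
  assumes "\<And>i j. A $ i $ j = (if i = p j then d i else 0)"
  shows "A = diag_matrix d ** perm_matrix p"
  using assms by (simp add: vec_eq_iff dp_entry)

lemma mul_form:
  assumes p1: "p1 permutes UNIV"
  shows "(diag_matrix d1 ** perm_matrix p1) ** (diag_matrix d2 ** perm_matrix p2)
     = diag_matrix (\<lambda>i. d1 i * d2 (inv p1 i)) ** perm_matrix (p1 \<circ> p2)"
proof (rule dp_eqI)
  fix i j
  have "(\<lambda>k. (if i = p1 k then d1 i else 0) * (if k = p2 j then d2 k else 0)) =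
        (\<lambda>k. if k = p2 j then (if i = p1 (p2 j) then d1 i * d2 (p2 j) else 0) else (0::real))"
    by auto
  note eq = this
  have "((diag_matrix d1 ** perm_matrix p1) ** (diag_matrix d2 ** perm_matrix p2)) $ i $ j
     = (\<Sum>k\<in>UNIV. (diag_matrix d1 ** perm_matrix p1) $ i $ k * (diag_matrix d2 ** perm_matrix p2) $ k $ j)"
    by (rule mm_entry)
  also have "\<dots> = (if i = (p1 \<circ> p2) j then d1 i * d2 (inv p1 i) else 0)"
    unfolding dp_entry eq by (simp add: permutes_inverses[OF p1])
  finally show "((diag_matrix d1 ** perm_matrix p1) ** (diag_matrix d2 ** perm_matrix p2)) $ i $ j
     = (if i = (p1 \<circ> p2) j then d1 i * d2 (inv p1 i) else 0)" .
qed

lemma tr_form: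
  assumes p: "p permutes UNIV"
  shows "transpose (diag_matrix d ** perm_matrix p) = diag_matrix (\<lambda>i. d (p i)) ** perm_matrix (inv p)"
proof (rule dp_eqI)
  fix i j
  show "transpose (diag_matrix d ** perm_matrix p) $ i $ j = (if i = inv p j then d (p i) else 0)"
    by (auto simp: transpose_def dp_entry permutes_inverses[OF p] permutes_inv_eq[OF p])
qed

lemma id_form: "mat 1 = diag_matrix (\<lambda>_. 1) ** perm_matrix id"
  by (rule dp_eqI) (simp add: mat_def)

lemma orth_form:
  assumes p: "p permutes UNIV" and d: "\<forall>i. d i \<in> {-1,1}"
  shows "orthogonal_matrix (diag_matrix d ** perm_matrix p)"
proof -
  have dd: "\<And>i. d i * d i = 1" using d by (metis insert_iff mult_1 mult_minus1 neg_equal_iff_equal singleton_iff square_eq_1_iff)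
  have pi: "inv p permutes UNIV" using permutes_inv[OF p] .
  show ?thesis
    unfolding orthogonal_matrix_def tr_form[OF p] mul_form[OF pi] mul_form[OF p]
    by (simp add: permutes_inverses[OF p] permutes_inv_o[OF p] dd id_form[symmetric]
                  permutes_inv_inv[OF p] mult.commute)
qed

lemma det_dm: "det (diag_matrix d) = prod d UNIV"
  by (subst det_diagonal) (auto simp: diag_matrix_def)



lemma uniq1: "\<exists>!x. P x \<Longrightarrow> P a \<Longrightarrow> P b \<Longrightarrow> a = b" by blast

lemma sp_iff: "signed_perm_matrix A \<longleftrightarrow>
  (\<exists>d p. (\<forall>i. d i \<in> {-1,1}) \<and> p permutes UNIV \<and> A = diag_matrix d ** perm_matrix p)"
proof
  assume "\<exists>d p. (\<forall>i. d i \<in> {-1,1}) \<and> p permutes UNIV \<and> A = diag_matrix d ** perm_matrix p"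
  then obtain d p where d: "\<forall>i. d i \<in> {-1,1}" and p: "p permutes UNIV"
    and A: "A = diag_matrix d ** perm_matrix p" by blast
  have nz: "d i \<noteq> 0" for i using d[rule_format, of i] by auto
  show "signed_perm_matrix A"
    unfolding signed_perm_matrix_def A dp_entry
  proof (intro conjI allI)
    fix i show "\<exists>!j. (if i = p j then d i else 0) \<noteq> 0"
      using nz by (intro ex1I[of _ "inv p i"]) (auto split: if_splits simp: permutes_inverses[OF p])
  next
    fix j show "\<exists>!i. (if i = p j then d i else 0) \<noteq> 0"
      using nz by (intro ex1I[of _ "p j"]) (auto split: if_splits)
  next
    fix i j show "(if i = p j then d i else 0) \<in> {-1, 0, 1}" using d by auto
  qed
next
  assume "signed_perm_matrix A"
  then have R: "\<And>i. \<exists>!j. A$i$j \<noteq> 0" and Cl: "\<And>j. \<exists>!i. A$i$j \<noteq> 0"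
    and E: "\<And>i j. A$i$j \<in> {-1,0,1}"
    unfolding signed_perm_matrix_def by auto
  define p where "p j = (THE i. A$i$j \<noteq> 0)" for j
  have pA: "A$(p j)$j \<noteq> 0" for j unfolding p_def using theI'[OF Cl] .
  have pU: "A$i$j \<noteq> 0 \<Longrightarrow> i = p j" for i j
    unfolding p_def by (rule the1_equality[OF Cl, symmetric])
  have p: "p permutes UNIV"
    unfolding permutes_def
  proof (intro conjI allI)
    fix y
    obtain j where j: "A$y$j \<noteq> 0" using R by blast
    show "\<exists>!x. p x = y"
    proof (rule ex1I[of _ j])
      show "p j = y" using pU[OF j] by simp
    next
      fix x assume "p x = y"
      then have "A$y$x \<noteq> 0" using pA by blast
      then show "x = j" using uniq1[OF R[of y]] j by blast
    qed
  qed simp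
  define d where "d i = A$i$(inv p i)" for i
  have "A = diag_matrix d ** perm_matrix p"
  proof (rule dp_eqI)
    fix i j show "A$i$j = (if i = p j then d i else 0)"
      using pU[of i j] by (auto simp: d_def permutes_inverses[OF p])
  qed
  moreover have "\<forall>i. d i \<in> {-1,1}"
  proof
    fix i
    have "A$i$(inv p i) \<noteq> 0" using pA[of "inv p i"] by (simp add: permutes_inverses[OF p])
    then show "d i \<in> {-1,1}" using E[of i "inv p i"] by (auto simp: d_def)
  qed
  ultimately show "\<exists>d p. (\<forall>i. d i \<in> {-1,1}) \<and> p permutes UNIV \<and> A = diag_matrix d ** perm_matrix p"
    using p by (intro exI[of _ d] exI[of _ p]) simp
qed

lemma pm1: "(a::real) \<in> {-1,1} \<Longrightarrow> b \<in> {-1,1} \<Longrightarrow> a*b \<in> {-1,1}" by auto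

lemma perm_of: "p permutes (UNIV::3 set) \<Longrightarrow> permutation p"
  by (rule permutes_imp_permutation[of UNIV]) simp_all

lemma T_props:
  shows "mat 1 \<in> tetrahedral_group"
    and "\<And>x y. x \<in> tetrahedral_group \<Longrightarrow> y \<in> tetrahedral_group \<Longrightarrow> x ** y \<in> tetrahedral_group"
    and "\<And>x. x \<in> tetrahedral_group \<Longrightarrow> transpose x \<in> tetrahedral_group"
    and "\<And>x. x \<in> tetrahedral_group \<Longrightarrow> orthogonal_matrix x"
proof -
  show "mat 1 \<in> tetrahedral_group"
    unfolding tetrahedral_group_def id_form
    by (rule CollectI, rule exI[of _ "\<lambda>_. 1"], rule exI[of _ id])
       (simp add: det_dm permutes_id evenperm_id)
next
  fix x y assume "x \<in> tetrahedral_group" "y \<in> tetrahedral_group"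
  then obtain d1 p1 d2 p2 where x: "x = diag_matrix d1 ** perm_matrix p1"
    and d1: "\<forall>i. d1 i \<in> {-1,1}" "det (diag_matrix d1) = 1" and p1: "p1 permutes UNIV" "evenperm p1"
    and y: "y = diag_matrix d2 ** perm_matrix p2"
    and d2: "\<forall>i. d2 i \<in> {-1,1}" "det (diag_matrix d2) = 1" and p2: "p2 permutes UNIV" "evenperm p2"
    unfolding tetrahedral_group_def by blast
  have "prod (\<lambda>i. d1 i * d2 (inv p1 i)) UNIV = prod d1 UNIV * prod (d2 \<circ> inv p1) UNIV"
    by (simp add: prod.distrib)
  also have "prod (d2 \<circ> inv p1) UNIV = prod d2 UNIV"
    using prod.permute[OF permutes_inv[OF p1(1)], of d2] by simp
  finally have "det (diag_matrix (\<lambda>i. d1 i * d2 (inv p1 i))) = 1"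
    using d1(2) d2(2) by (simp add: det_dm)
  moreover have "\<forall>i. d1 i * d2 (inv p1 i) \<in> {-1,1}" using d1(1) d2(1) pm1 by blast
  moreover have "p1 \<circ> p2 permutes UNIV" by (rule permutes_compose[OF p2(1) p1(1)])
  moreover have "evenperm (p1 \<circ> p2)"
    using evenperm_comp[OF perm_of[OF p1(1)] perm_of[OF p2(1)]] p1(2) p2(2) by blast
  ultimately show "x ** y \<in> tetrahedral_group"
    unfolding x y mul_form[OF p1(1)] tetrahedral_group_def by blast
next
  fix x assume "x \<in> tetrahedral_group"
  then obtain d p where x: "x = diag_matrix d ** perm_matrix p"
    and d: "\<forall>i. d i \<in> {-1,1}" "det (diag_matrix d) = 1" and p: "p permutes UNIV" "evenperm p"
    unfolding tetrahedral_group_def by blast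
  have "prod (\<lambda>i. d (p i)) UNIV = prod d UNIV"
    using prod.permute[OF p(1), of d] by (simp add: o_def)
  then have "det (diag_matrix (\<lambda>i. d (p i))) = 1" using d(2) by (simp add: det_dm)
  moreover have "\<forall>i. d (p i) \<in> {-1,1}" using d(1) by auto
  moreover have "inv p permutes UNIV" by (rule permutes_inv[OF p(1)])
  moreover have "evenperm (inv p)" using evenperm_inv[OF perm_of[OF p(1)]] p(2) by blast
  ultimately show "transpose x \<in> tetrahedral_group"
    unfolding x tr_form[OF p(1)] tetrahedral_group_def by blast
next
  fix x assume "x \<in> tetrahedral_group"
  then show "orthogonal_matrix x"
    unfolding tetrahedral_group_def using orth_form by blast
qed

lemma O_mem: "A \<in> octahedral_group \<longleftrightarrow> signed_perm_matrix A \<and> det A = 1"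
  by (simp add: octahedral_group_def)

lemma O_props:
  shows "mat 1 \<in> octahedral_group"
    and "\<And>x y. x \<in> octahedral_group \<Longrightarrow> y \<in> octahedral_group \<Longrightarrow> x ** y \<in> octahedral_group"
    and "\<And>x. x \<in> octahedral_group \<Longrightarrow> transpose x \<in> octahedral_group"
    and "\<And>x. x \<in> octahedral_group \<Longrightarrow> orthogonal_matrix x"
proof -
  have "signed_perm_matrix (mat 1)"
    unfolding sp_iff id_form
    by (intro exI[of _ "\<lambda>_. 1"] exI[of _ id]) (simp add: permutes_id)
  then show "mat 1 \<in> octahedral_group" by (simp add: O_mem)
next
  fix x y assume hx: "x \<in> octahedral_group" and hy: "y \<in> octahedral_group"
  then have sx: "signed_perm_matrix x" and sy: "signed_perm_matrix y"
    and dets: "det x = 1" "det y = 1" by (simp_all add: O_mem)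
  obtain d1 p1 where x: "x = diag_matrix d1 ** perm_matrix p1"
    and d1: "\<forall>i. d1 i \<in> {-1,1}" and p1: "p1 permutes UNIV"
    using sx unfolding sp_iff by blast
  obtain d2 p2 where y: "y = diag_matrix d2 ** perm_matrix p2"
    and d2: "\<forall>i. d2 i \<in> {-1,1}" and p2: "p2 permutes UNIV"
    using sy unfolding sp_iff by blast
  have "det (x ** y) = 1" using dets by (simp add: det_mul)
  moreover have dd: "\<forall>i. d1 i * d2 (inv p1 i) \<in> {-1,1}" using d1 d2 pm1 by blast
  moreover have pp: "p1 \<circ> p2 permutes UNIV" by (rule permutes_compose[OF p2 p1])
  moreover have "signed_perm_matrix (x ** y)"
    unfolding sp_iff x y mul_form[OF p1]
    by (intro exI[of _ "\<lambda>i. d1 i * d2 (inv p1 i)"] exI[of _ "p1 \<circ> p2"] conjI dd pp refl)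
  ultimately show "x ** y \<in> octahedral_group" by (simp add: O_mem)
next
  fix x assume "x \<in> octahedral_group"
  then have sx: "signed_perm_matrix x" and dx: "det x = 1" by (simp_all add: O_mem)
  obtain d p where x: "x = diag_matrix d ** perm_matrix p"
    and d: "\<forall>i. d i \<in> {-1,1}" and p: "p permutes UNIV"
    using sx unfolding sp_iff by blast
  have "det (transpose x) = 1" using dx by (simp add: det_transpose)
  moreover have dd: "\<forall>i. d (p i) \<in> {-1,1}" using d by auto
  moreover have pp: "inv p permutes UNIV" by (rule permutes_inv[OF p])
  moreover have "signed_perm_matrix (transpose x)"
    unfolding sp_iff x tr_form[OF p]
    by (intro exI[of _ "\<lambda>i. d (p i)"] exI[of _ "inv p"] conjI dd pp refl)
  ultimately show "transpose x \<in> octahedral_group" by (simp add: O_mem)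
next
  fix x assume "x \<in> octahedral_group"
  then have sx: "signed_perm_matrix x" by (simp add: O_mem)
  then obtain d p where x: "x = diag_matrix d ** perm_matrix p"
    and d: "\<forall>i. d i \<in> {-1,1}" and p: "p permutes UNIV"
    unfolding sp_iff by blast
  show "orthogonal_matrix x" unfolding x by (rule orth_form[OF p d])
qed



lemma orth_simps:
  fixes Q :: mat3
  assumes "orthogonal_matrix Q"
  shows "transpose Q ** Q = mat 1" "Q ** transpose Q = mat 1"
    "transpose Q ** (Q ** X) = X" "Q ** (transpose Q ** X) = X"
  using assms unfolding orthogonal_matrix_def
  by (auto simp: matrix_mul_assoc)

lemma rot_mul: "A \<in> SO3 \<Longrightarrow> B \<in> SO3 \<Longrightarrow> A ** B \<in> SO3"
  by (simp add: SO3_def rotation_matrix_def orthogonal_matrix_mul det_mul)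

lemma rot_tr: "A \<in> SO3 \<Longrightarrow> transpose A \<in> SO3"
  by (simp add: SO3_def rotation_matrix_def orthogonal_matrix_transpose det_transpose)

lemma abstract_main:
  fixes G :: "mat3 set" and Rij Rji Ri Rj :: mat3
  assumes I: "mat 1 \<in> G" and M: "\<And>x y. x\<in>G \<Longrightarrow> y\<in>G \<Longrightarrow> x ** y \<in> G"
    and T: "\<And>x. x\<in>G \<Longrightarrow> transpose x \<in> G" and O: "\<And>x. x\<in>G \<Longrightarrow> orthogonal_matrix x"
    and "Rij \<in> SO3" and "Rji \<in> SO3" and "Ri \<in> SO3" and "Rj \<in> SO3"
    and E: "(\<lambda>g. transpose Rij ** g ** Rji) ` G = (\<lambda>g. transpose Ri ** g ** Rj) ` G"
  shows "\<exists>hij hji. hij \<in> normalizer SO3 G \<and> hji \<in> normalizer SO3 G \<and>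
           Rij = hij ** Ri \<and> Rji = hji ** Rj"
proof -
  have oij: "orthogonal_matrix Rij" and oji: "orthogonal_matrix Rji"
    and oi: "orthogonal_matrix Ri" and oj: "orthogonal_matrix Rj"
    using assms(5-8) by (auto simp: SO3_def rotation_matrix_def)
  define a where "a = Rij ** transpose Ri"
  define b where "b = Rji ** transpose Rj"
  have aS: "a \<in> SO3" "b \<in> SO3" unfolding a_def b_def using assms(5-8) rot_mul rot_tr by auto
  have oa: "orthogonal_matrix a" and ob: "orthogonal_matrix b"
    using aS by (auto simp: SO3_def rotation_matrix_def)
  note os = orth_simps[OF oij] orth_simps[OF oji] orth_simps[OF oi] orth_simps[OF oj]
     orth_simps[OF oa] orth_simps[OF ob]
  have r1: "Rij = a ** Ri" "Rji = b ** Rj"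
    unfolding a_def b_def by (simp_all add: os flip: matrix_mul_assoc)
  let ?f = "\<lambda>x. transpose Ri ** x ** Rj"
  have inj: "inj ?f"
  proof (rule injI)
    fix x y assume "?f x = ?f y"
    then have "Ri ** ?f x ** transpose Rj = Ri ** ?f y ** transpose Rj" by simp
    then show "x = y" by (simp add: os flip: matrix_mul_assoc)
  qed
  have C: "(\<lambda>g. transpose Rij ** g ** Rji) = ?f \<circ> (\<lambda>g. transpose a ** g ** b)"
    by (rule ext) (simp add: r1 matrix_transpose_mul os flip: matrix_mul_assoc)
  have "?f ` ((\<lambda>g. transpose a ** g ** b) ` G) = ?f ` G"
    using E unfolding C image_comp[symmetric] .
  then have E2: "(\<lambda>g. transpose a ** g ** b) ` G = G"
    using inj by (simp add: inj_image_eq_iff)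
  from I obtain g0 where g0: "g0 \<in> G" "transpose a ** g0 ** b = mat 1"
    by (metis (no_types, lifting) E2 imageE)
  note og = orth_simps[OF O[OF g0(1)]]
  have "a ** (transpose a ** g0 ** b) = a" using g0 by simp
  then have "g0 ** b = a" by (simp add: os flip: matrix_mul_assoc)
  then have "transpose g0 ** (g0 ** b) = transpose g0 ** a" by simp
  then have bg: "b = transpose g0 ** a" by (simp add: og)
  have Na: "(\<lambda>g. transpose a ** g ** a) ` G = G"
  proof
    show "(\<lambda>g. transpose a ** g ** a) ` G \<subseteq> G"
    proof clarify
      fix g assume g: "g \<in> G"
      have "transpose a ** g ** a = transpose a ** (g ** g0) ** b"
        by (simp add: bg og flip: matrix_mul_assoc)
      also have "\<dots> \<in> G" using E2 M[OF g g0(1)] by blast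
      finally show "transpose a ** g ** a \<in> G" .
    qed
  next
    show "G \<subseteq> (\<lambda>g. transpose a ** g ** a) ` G"
    proof
      fix h assume "h \<in> G"
      then obtain g where g: "g \<in> G" "h = transpose a ** g ** b" using E2 by blast
      have "h = transpose a ** (g ** transpose g0) ** a"
        using g by (simp add: bg og matrix_mul_assoc)
      then show "h \<in> (\<lambda>g. transpose a ** g ** a) ` G" using M[OF g(1) T[OF g0(1)]] by blast
    qed
  qed
  have Nb: "(\<lambda>g. transpose b ** g ** b) ` G = G"
  proof
    show "(\<lambda>g. transpose b ** g ** b) ` G \<subseteq> G"
    proof clarify
      fix g assume g: "g \<in> G"
      have "transpose b ** g ** b = transpose a ** (g0 ** g ** transpose g0) ** a"
        by (simp add: bg og matrix_transpose_mul matrix_mul_assoc)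
      also have "\<dots> \<in> G" using Na M[OF M[OF g0(1) g] T[OF g0(1)]] by blast
      finally show "transpose b ** g ** b \<in> G" .
    qed
  next
    show "G \<subseteq> (\<lambda>g. transpose b ** g ** b) ` G"
    proof
      fix h assume "h \<in> G"
      then obtain k where k: "k \<in> G" "h = transpose a ** k ** a" using Na by blast
      have "h = transpose b ** (transpose g0 ** k ** g0) ** b"
        using k by (simp add: bg og matrix_transpose_mul flip: matrix_mul_assoc)
      then show "h \<in> (\<lambda>g. transpose b ** g ** b) ` G" using M[OF M[OF T[OF g0(1)] k(1)] g0(1)] by blast
    qed
  qed
  show ?thesis
    using aS Na Nb r1 unfolding normalizer_def by blast
qed


theorem proposition1:
  fixes G :: "(real^3^3) set" and Rij Rji Ri Rj :: "real^3^3"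
  assumes "G = tetrahedral_group \<or> G = octahedral_group"
    and "Rij \<in> SO3" and "Rji \<in> SO3" and "Ri \<in> SO3" and "Rj \<in> SO3"
    and "(\<lambda>g. transpose Rij ** g ** Rji) ` G = (\<lambda>g. transpose Ri ** g ** Rj) ` G"
  shows "\<exists>hij hji. hij \<in> normalizer SO3 G \<and> hji \<in> normalizer SO3 G \<and>
           Rij = hij ** Ri \<and> Rji = hji ** Rj"
  using assms(1)
proof
  assume h: "G = tetrahedral_group"
  show ?thesis
    by (rule abstract_main[OF _ _ _ _ assms(2-6)]) (use T_props h in auto)
next
  assume h: "G = octahedral_group"
  show ?thesis
    by (rule abstract_main[OF _ _ _ _ assms(2-6)]) (use O_props h in auto)
qed

end
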